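(* Let $L$ be a $\kappa$-frame and $I$ a $\kappa$-ideal of $L$. Among the congruences $D\in\mathbb{C}L$ with $\nabla_I\le D$ and $c\ell(D)\le\nabla_I$ there is a largest one, denoted $\partial_I$; it is the congruence corresponding to $\mathfrak{D}_{L/\nabla_I}$ under the correspondence between $\mathbb{C}(L/\nabla_I)$ and congruences on $L$ containing $\nabla_I$, and \[\partial_I=\{(a,b)\in L\times L\mid \text{for all } x\in L:\ a\wedge x\in I \iff b\wedge x\in I\}.\]
   Context: $\kappa$ is a fixed regular cardinal; a $\kappa$-frame is a bounded distributive lattice having joins of all subsets of cardinality $<\kappa$ and satisfying the frame distributive law for such joins. A $\kappa$-ideal is a downset in which every subset of cardinality $<\kappa$ has an upper bound. A congruence is an equivalence relation which is a sub-$\kappa$-frame of $L\times L$; $\mathbb{C}L$ is the frame of congruences under inclusion. $\nabla_a=\{(x,y)\mid x\vee a=y\vee a\}$, $\nabla_I=\bigvee_{a\in I}\nabla_a$. A congruence is closed if it is a join of congruences $\nabla_a$; $c\ell(C)$ is the largest closed congruence contained in $C$. For any $\kappa$-frame $M$, $\mathfrak{D}_M=\{(a,b)\mid \forall x\in M:\ a\wedge x=0\iff b\wedge x=0\}$, which is the largest congruence $D$ on $M$ with $c\ell(D)$ equal to the trivial (diagonal) congruence (Madden). *)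

theory Defs
  imports Main
begin

text \<open>Cardinals are represented by well-order relations (BNF cardinals of Main).
  A set S is small (of cardinality below kappa) iff |S| <o kappa.\<close>

definition small :: "'k rel \<Rightarrow> 'a set \<Rightarrow> bool" where
  "small \<kappa> S \<longleftrightarrow> (card_of S, \<kappa>) \<in> ordLess"

definition regular_cardinal :: "'k rel \<Rightarrow> bool" where
  "regular_cardinal \<kappa> \<longleftrightarrow> Cinfinite \<kappa> \<and> regularCard \<kappa>"

definition is_lub :: "'a::order set \<Rightarrow> 'a \<Rightarrow> bool" where
  "is_lub S u \<longleftrightarrow> (\<forall>s\<in>S. s \<le> u) \<and> (\<forall>v. (\<forall>s\<in>S. s \<le> v) \<longrightarrow> u \<le> v)"

definition kJoin :: "'a::order set \<Rightarrow> 'a" where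
  "kJoin S = (THE u. is_lub S u)"

definition kframe :: "'k rel \<Rightarrow> ('a::{distrib_lattice,bounded_lattice}) itself \<Rightarrow> bool" where
  "kframe \<kappa> T \<longleftrightarrow>
     (\<forall>S::'a set. small \<kappa> S \<longrightarrow> (\<exists>u. is_lub S u)) \<and>
     (\<forall>(S::'a set) x u. small \<kappa> S \<longrightarrow> is_lub S u \<longrightarrow> is_lub ((\<lambda>s. inf x s) ` S) (inf x u))"

definition kideal :: "'k rel \<Rightarrow> 'a::{distrib_lattice,bounded_lattice} set \<Rightarrow> bool" where
  "kideal \<kappa> I \<longleftrightarrow>
     (\<forall>a\<in>I. \<forall>b. b \<le> a \<longrightarrow> b \<in> I) \<and>
     (\<forall>S. S \<subseteq> I \<longrightarrow> small \<kappa> S \<longrightarrow> (\<exists>u\<in>I. \<forall>s\<in>S. s \<le> u))"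

definition kcong :: "'k rel \<Rightarrow> ('a::{distrib_lattice,bounded_lattice}) rel \<Rightarrow> bool" where
  "kcong \<kappa> C \<longleftrightarrow> equiv UNIV C \<and>
     (\<forall>a b c d. (a,b) \<in> C \<longrightarrow> (c,d) \<in> C \<longrightarrow> (inf a c, inf b d) \<in> C) \<and>
     (\<forall>S. S \<subseteq> C \<longrightarrow> small \<kappa> S \<longrightarrow> (kJoin (fst ` S), kJoin (snd ` S)) \<in> C)"

definition congJoin :: "'k rel \<Rightarrow> ('a::{distrib_lattice,bounded_lattice}) rel set \<Rightarrow> 'a rel" where
  "congJoin \<kappa> F = \<Inter>{C. kcong \<kappa> C \<and> \<Union>F \<subseteq> C}"

definition nabla :: "'a::{distrib_lattice,bounded_lattice} \<Rightarrow> 'a rel" where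
  "nabla a = {(x,y). sup x a = sup y a}"

definition nablaI :: "'k rel \<Rightarrow> 'a::{distrib_lattice,bounded_lattice} set \<Rightarrow> 'a rel" where
  "nablaI \<kappa> I = congJoin \<kappa> (nabla ` I)"

definition closed_cong :: "'k rel \<Rightarrow> ('a::{distrib_lattice,bounded_lattice}) rel \<Rightarrow> bool" where
  "closed_cong \<kappa> C \<longleftrightarrow> kcong \<kappa> C \<and> (\<exists>A. C = congJoin \<kappa> (nabla ` A))"

definition cl :: "'k rel \<Rightarrow> ('a::{distrib_lattice,bounded_lattice}) rel \<Rightarrow> 'a rel" where
  "cl \<kappa> C = (GREATEST D. closed_cong \<kappa> D \<and> D \<subseteq> C)"

definition madden :: "'b set \<Rightarrow> ('b \<Rightarrow> 'b \<Rightarrow> 'b) \<Rightarrow> 'b \<Rightarrow> 'b rel" where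
  "madden M meet z = {(a,b). a \<in> M \<and> b \<in> M \<and> (\<forall>x\<in>M. meet a x = z \<longleftrightarrow> meet b x = z)}"

text \<open>The quotient kappa-frame L/C: carrier UNIV // C, operations induced on classes.\<close>

definition qmeet :: "('a::{distrib_lattice,bounded_lattice}) rel \<Rightarrow> 'a set \<Rightarrow> 'a set \<Rightarrow> 'a set" where
  "qmeet C X Y = C `` {inf (SOME a. a \<in> X) (SOME b. b \<in> Y)}"

definition qbot :: "('a::{distrib_lattice,bounded_lattice}) rel \<Rightarrow> 'a set" where
  "qbot C = C `` {bot}"

text \<open>Correspondence between congruences on L/C and congruences on L containing C.\<close>

definition pullback_cong :: "'a rel \<Rightarrow> 'a set rel \<Rightarrow> 'a rel" where
  "pullback_cong C E = {(a,b). (C `` {a}, C `` {b}) \<in> E}"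

end

theory Submission
  imports Defs
begin

lemma small_finite: "regular_cardinal \<kappa> \<Longrightarrow> finite S \<Longrightarrow> small \<kappa> S"
  unfolding regular_cardinal_def small_def
  by (metis Cfinite_ordLess_Cinfinite Field_card_of card_of_Card_order cfinite_def)

lemma small_image: "small \<kappa> S \<Longrightarrow> small \<kappa> (f ` S)"
  unfolding small_def using card_of_image ordLeq_ordLess_trans by blast

lemma small_subset: "small \<kappa> S \<Longrightarrow> T \<subseteq> S \<Longrightarrow> small \<kappa> T"
  unfolding small_def using card_of_mono1 ordLeq_ordLess_trans by blast

lemma lub_unique: "is_lub S u \<Longrightarrow> is_lub S v \<Longrightarrow> u = v"
  unfolding is_lub_def by (meson order_antisym)

lemma kJoin_eq: "is_lub S u \<Longrightarrow> kJoin S = u"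
  unfolding kJoin_def using lub_unique by (metis theI)

lemma lub_pair: "is_lub {a, b} (sup a (b::'a::lattice))"
  unfolding is_lub_def by auto

lemma kJoin_pair: "kJoin {a, b} = sup a (b::'a::lattice)"
  using kJoin_eq lub_pair by blast

context
  fixes \<kappa> :: "'k rel" and I :: "('a::{distrib_lattice,bounded_lattice}) set"
  assumes reg: "regular_cardinal \<kappa>"
    and fr: "kframe \<kappa> TYPE('a)"
    and id: "kideal \<kappa> I"
begin

lemma I_down: "a \<in> I \<Longrightarrow> b \<le> a \<Longrightarrow> b \<in> I"
  using id unfolding kideal_def by blast

lemma I_bound: "S \<subseteq> I \<Longrightarrow> small \<kappa> S \<Longrightarrow> \<exists>u\<in>I. \<forall>s\<in>S. s \<le> u"
  using id unfolding kideal_def by blast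

lemma I_bot: "bot \<in> I"
proof -
  have "small \<kappa> ({}::'a set)" using small_finite[OF reg] by blast
  then obtain u where "u \<in> I" using I_bound[of "{}"] by blast
  then show ?thesis using I_down[of u bot] by simp
qed

lemma I_sup: "a \<in> I \<Longrightarrow> b \<in> I \<Longrightarrow> sup a b \<in> I"
proof -
  assume "a \<in> I" "b \<in> I"
  then obtain u where "u \<in> I" "a \<le> u" "b \<le> u"
  proof -
    have "small \<kappa> {a,b}" by (rule small_finite[OF reg]) simp
    then show ?thesis using that I_bound[of "{a,b}"] \<open>a \<in> I\<close> \<open>b \<in> I\<close> by auto
  qed
  then show ?thesis using I_down by simp
qed

lemma lub_ex: "small \<kappa> S \<Longrightarrow> \<exists>u. is_lub (S::'a set) u"
  using fr unfolding kframe_def by blast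

lemma lub_dist: "small \<kappa> S \<Longrightarrow> is_lub (S::'a set) u \<Longrightarrow> is_lub ((\<lambda>s. inf x s) ` S) (inf x u)"
  using fr unfolding kframe_def by blast

lemma kcong_sup: "kcong \<kappa> C \<Longrightarrow> (a,b) \<in> C \<Longrightarrow> (c,d) \<in> C \<Longrightarrow> (sup a c, sup b d) \<in> (C::'a rel)"
proof -
  assume k: "kcong \<kappa> C" and ab: "(a,b) \<in> C" and cd: "(c,d) \<in> C"
  let ?S = "{(a,b),(c,d)}"
  have "small \<kappa> ?S" by (rule small_finite[OF reg]) simp
  moreover have "?S \<subseteq> C" using ab cd by simp
  ultimately have "(kJoin (fst ` ?S), kJoin (snd ` ?S)) \<in> C" using k unfolding kcong_def by blast
  then show ?thesis by (simp add: kJoin_pair)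
qed

lemma kcongI: "equiv UNIV C \<Longrightarrow> (\<forall>a b c d. (a,b) \<in> C \<longrightarrow> (c,d) \<in> C \<longrightarrow> (inf a c, inf b d) \<in> C) \<Longrightarrow>
  (\<forall>S. S \<subseteq> C \<longrightarrow> small \<kappa> S \<longrightarrow> (kJoin (fst ` S), kJoin (snd ` S)) \<in> C) \<Longrightarrow> kcong \<kappa> (C::'a rel)"
  unfolding kcong_def by blast

lemma kcong_inf: "kcong \<kappa> C \<Longrightarrow> (a,b) \<in> C \<Longrightarrow> (c,d) \<in> C \<Longrightarrow> (inf a c, inf b d) \<in> (C::'a rel)"
  unfolding kcong_def by blast

lemma kcong_refl: "kcong \<kappa> C \<Longrightarrow> (a,a) \<in> (C::'a rel)"
  unfolding kcong_def equiv_def refl_on_def by blast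

lemma kcong_sym: "kcong \<kappa> C \<Longrightarrow> (a,b) \<in> C \<Longrightarrow> (b,a) \<in> (C::'a rel)"
  unfolding kcong_def equiv_def sym_def by blast

lemma kcong_trans: "kcong \<kappa> C \<Longrightarrow> (a,b) \<in> C \<Longrightarrow> (b,c) \<in> C \<Longrightarrow> (a,c) \<in> (C::'a rel)"
  unfolding kcong_def equiv_def trans_def by blast

lemma kcong_UNIV: "kcong \<kappa> (UNIV :: 'a rel)"
  unfolding kcong_def equiv_def refl_on_def sym_def trans_def by auto

lemma congJoin_kcong: "kcong \<kappa> (congJoin \<kappa> (F :: 'a rel set))"
proof -
  let ?A = "{C. kcong \<kappa> C \<and> \<Union>F \<subseteq> C}"
  have eq: "equiv UNIV (\<Inter>?A)"
  proof (rule equivI)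
    show "refl_on UNIV (\<Inter>?A)" by (rule refl_onI) (use kcong_refl in blast)
    show "sym (\<Inter>?A)" by (rule symI) (use kcong_sym in blast)
    show "trans (\<Inter>?A)" by (rule transI) (use kcong_trans in blast)
  qed simp
  have m: "\<forall>a b c d. (a,b) \<in> \<Inter>?A \<longrightarrow> (c,d) \<in> \<Inter>?A \<longrightarrow> (inf a c, inf b d) \<in> \<Inter>?A"
  proof (intro allI impI InterI)
    fix a b c d C assume "(a,b) \<in> \<Inter>?A" "(c,d) \<in> \<Inter>?A" "C \<in> ?A"
    then have "kcong \<kappa> C" "(a,b) \<in> C" "(c,d) \<in> C" by auto
    then show "(inf a c, inf b d) \<in> C" by (rule kcong_inf)
  qed
  have j: "\<forall>S. S \<subseteq> \<Inter>?A \<longrightarrow> small \<kappa> S \<longrightarrow> (kJoin (fst ` S), kJoin (snd ` S)) \<in> \<Inter>?A"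
  proof (intro allI impI InterI)
    fix S C assume "S \<subseteq> \<Inter>?A" "small \<kappa> S" "C \<in> ?A"
    then have "kcong \<kappa> C" "S \<subseteq> C" "small \<kappa> S" by auto
    then show "(kJoin (fst ` S), kJoin (snd ` S)) \<in> C" unfolding kcong_def by blast
  qed
  show ?thesis unfolding congJoin_def by (rule kcongI[OF eq m j])
qed

lemma congJoin_upper: "\<Union>F \<subseteq> congJoin \<kappa> (F :: 'a rel set)"
  unfolding congJoin_def by blast

lemma congJoin_least: "kcong \<kappa> C \<Longrightarrow> \<Union>F \<subseteq> C \<Longrightarrow> congJoin \<kappa> (F :: 'a rel set) \<subseteq> C"
  unfolding congJoin_def by blast

lemma congJoin_mono: "A \<subseteq> B \<Longrightarrow> congJoin \<kappa> (nabla ` A) \<subseteq> congJoin \<kappa> (nabla ` (B::'a set))"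
  by (rule congJoin_least[OF congJoin_kcong]) (use congJoin_upper[of "nabla ` B"] in blast)

definition NU :: "'a rel" where
  "NU = {(x,y). \<exists>a\<in>I. sup x a = sup y a}"

lemma NU_kcong: "kcong \<kappa> NU"
proof -
  have eq: "equiv UNIV NU"
  proof (rule equivI)
    show "refl_on UNIV NU" by (rule refl_onI) (use I_bot in \<open>auto simp: NU_def\<close>)
    show "sym NU" by (rule symI) (auto simp: NU_def intro: sym)
    show "trans NU"
    proof (rule transI)
      fix x y z assume "(x, y) \<in> NU" "(y, z) \<in> NU"
      then obtain a b where ab: "a \<in> I" "b \<in> I" "sup x a = sup y a" "sup y b = sup z b" unfolding NU_def by auto
      have "sup x (sup a b) = sup (sup x a) b" by (simp add: sup_assoc)
      also have "\<dots> = sup (sup y b) a" using ab by (simp add: sup_assoc sup_commute sup_left_commute)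
      also have "\<dots> = sup (sup z b) a" using ab by simp
      also have "\<dots> = sup z (sup a b)" by (simp add: sup_assoc sup_commute sup_left_commute)
      finally show "(x, z) \<in> NU" unfolding NU_def using I_sup ab by blast
    qed
  qed simp
  have m: "\<forall>a b c d. (a,b) \<in> NU \<longrightarrow> (c,d) \<in> NU \<longrightarrow> (inf a c, inf b d) \<in> NU"
  proof (intro allI impI)
    fix a b c d assume "(a,b) \<in> NU" "(c,d) \<in> NU"
    then obtain u v where uv: "u \<in> I" "v \<in> I" "sup a u = sup b u" "sup c v = sup d v"
      unfolding NU_def by auto
    let ?w = "sup u v"
    have 1: "sup a ?w = sup b ?w"
    proof -
      have "sup a ?w = sup (sup a u) v" by (rule sup_assoc[symmetric])
      also have "\<dots> = sup (sup b u) v" using uv(3) by simp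
      also have "\<dots> = sup b ?w" by (rule sup_assoc)
      finally show ?thesis .
    qed
    have 2: "sup c ?w = sup d ?w"
    proof -
      have "sup c ?w = sup u (sup c v)" by (rule sup_left_commute)
      also have "\<dots> = sup u (sup d v)" using uv(4) by simp
      also have "\<dots> = sup d ?w" by (rule sup_left_commute)
      finally show ?thesis .
    qed
    have "sup (inf a c) ?w = inf (sup a ?w) (sup c ?w)" by (simp add: sup_inf_distrib2)
    also have "\<dots> = inf (sup b ?w) (sup d ?w)" using 1 2 by simp
    also have "\<dots> = sup (inf b d) ?w" by (simp add: sup_inf_distrib2)
    finally show "(inf a c, inf b d) \<in> NU" unfolding NU_def using I_sup uv by blast
  qed
  have j: "\<forall>S. S \<subseteq> NU \<longrightarrow> small \<kappa> S \<longrightarrow> (kJoin (fst ` S), kJoin (snd ` S)) \<in> NU"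
  proof (intro allI impI)
    fix S assume SN: "S \<subseteq> NU" and sS: "small \<kappa> S"
    have "\<forall>s\<in>S. \<exists>a\<in>I. sup (fst s) a = sup (snd s) a" using SN unfolding NU_def by auto
    then obtain f where f: "\<forall>s\<in>S. f s \<in> I \<and> sup (fst s) (f s) = sup (snd s) (f s)" by metis
    then obtain u where u: "u \<in> I" "\<forall>s\<in>S. f s \<le> u"
      using I_bound[of "f ` S"] small_image[OF sS] by auto
    have su: "\<forall>s\<in>S. sup (fst s) u = sup (snd s) u"
    proof
      fix s assume "s \<in> S"
      then have "sup (fst s) (f s) = sup (snd s) (f s)" "f s \<le> u" using f u by auto
      then have e: "sup (fst s) (f s) = sup (snd s) (f s)" and le: "f s \<le> u" by auto
      have "sup (fst s) u = sup (fst s) (sup (f s) u)" using le by (simp add: sup_absorb2)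
      also have "\<dots> = sup (sup (fst s) (f s)) u" by (rule sup_assoc[symmetric])
      also have "\<dots> = sup (sup (snd s) (f s)) u" using e by simp
      also have "\<dots> = sup (snd s) (sup (f s) u)" by (rule sup_assoc)
      also have "\<dots> = sup (snd s) u" using le by (simp add: sup_absorb2)
      finally show "sup (fst s) u = sup (snd s) u" .
    qed
    obtain lx where lx: "is_lub (fst ` S) lx" using lub_ex small_image[OF sS] by blast
    obtain ly where ly: "is_lub (snd ` S) ly" using lub_ex small_image[OF sS] by blast
    have A: "\<And>X Y lx ly. (\<forall>s\<in>S. sup (X s) u = sup (Y s) u) \<Longrightarrow> is_lub (X ` S) lx \<Longrightarrow> is_lub (Y ` S) ly \<Longrightarrow> lx \<le> sup ly u"
    proof -
      fix X Y lx ly assume e: "\<forall>s\<in>S. sup (X s) u = sup (Y s) u" and lx: "is_lub (X ` S) lx" and ly: "is_lub (Y ` S) ly"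
      have "\<forall>t\<in>X ` S. t \<le> sup ly u"
      proof
        fix t assume "t \<in> X ` S"
        then obtain s where s: "s \<in> S" "t = X s" by auto
        have "Y s \<le> ly" using ly s unfolding is_lub_def by auto
        have "t \<le> sup (X s) u" using s by simp
        also have "\<dots> = sup (Y s) u" using e s by simp
        also have "\<dots> \<le> sup ly u" using \<open>Y s \<le> ly\<close> by (simp add: le_supI1)
        finally show "t \<le> sup ly u" .
      qed
      then show "lx \<le> sup ly u" using lx unfolding is_lub_def by blast
    qed
    have "lx \<le> sup ly u" using A[of fst snd lx ly] su lx ly by blast
    moreover have "ly \<le> sup lx u" using A[of snd fst ly lx] su lx ly by auto
    ultimately have "sup lx u = sup ly u" by (simp add: order_antisym)
    then show "(kJoin (fst ` S), kJoin (snd ` S)) \<in> NU"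
      unfolding NU_def using kJoin_eq[OF lx] kJoin_eq[OF ly] u by auto
  qed
  show ?thesis by (rule kcongI[OF eq m j])
qed

lemma nabla_sub_NU: "a \<in> I \<Longrightarrow> nabla a \<subseteq> NU"
  unfolding nabla_def NU_def by auto

lemma nablaI_eq: "nablaI \<kappa> I = NU"
proof
  show "nablaI \<kappa> I \<subseteq> NU" unfolding nablaI_def
    by (rule congJoin_least[OF NU_kcong]) (use nabla_sub_NU in blast)
  show "NU \<subseteq> nablaI \<kappa> I"
  proof
    fix p assume "p \<in> NU"
    then obtain a where "a \<in> I" "p \<in> nabla a" unfolding NU_def nabla_def by auto
    then show "p \<in> nablaI \<kappa> I" unfolding nablaI_def using congJoin_upper[of "nabla ` I"] by blast
  qed
qed

lemma NU_bot: "(c, bot) \<in> NU \<longleftrightarrow> c \<in> I"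
proof
  assume "(c, bot) \<in> NU"
  then obtain a where "a \<in> I" "sup c a = a" unfolding NU_def by auto
  then have "c \<le> a" by (simp add: le_iff_sup)
  then show "c \<in> I" using I_down \<open>a \<in> I\<close> by blast
next
  assume "c \<in> I" then show "(c, bot) \<in> NU" unfolding NU_def by (auto intro: bexI[of _ c])
qed

lemma cl_eq: "kcong \<kappa> C \<Longrightarrow> cl \<kappa> (C::'a rel) = congJoin \<kappa> (nabla ` {a. nabla a \<subseteq> C})"
proof -
  assume k: "kcong \<kappa> C"
  let ?G = "congJoin \<kappa> (nabla ` {a. nabla a \<subseteq> C})"
  have G1: "closed_cong \<kappa> ?G" unfolding closed_cong_def using congJoin_kcong by auto
  have G2: "?G \<subseteq> C" by (rule congJoin_least[OF k]) blast
  have G3: "\<And>D. closed_cong \<kappa> D \<and> D \<subseteq> C \<Longrightarrow> D \<le> ?G"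
  proof -
    fix D assume "closed_cong \<kappa> D \<and> D \<subseteq> C"
    then obtain A where A: "D = congJoin \<kappa> (nabla ` A)" "D \<subseteq> C" unfolding closed_cong_def by blast
    then have "A \<subseteq> {a. nabla a \<subseteq> C}" using congJoin_upper[of "nabla ` A"] by blast
    then have "congJoin \<kappa> (nabla ` A) \<subseteq> ?G" by (rule congJoin_mono)
    then show "D \<le> ?G" using A(1) by simp
  qed
  show ?thesis unfolding cl_def
    by (rule Greatest_equality) (use G1 G2 G3 in auto)
qed


lemma NU_equiv: "equiv UNIV NU"
  using NU_kcong unfolding kcong_def by blast

lemma NU_class_eq: "(NU``{a} = NU``{b}) = ((a,b) \<in> NU)"
  using eq_equiv_class_iff[OF NU_equiv] by blast

lemma qmeet_class: "qmeet NU (NU``{a}) (NU``{x}) = NU``{inf a x}"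
proof -
  let ?a = "SOME a'. a' \<in> NU``{a}" and ?x = "SOME y. y \<in> NU``{x}"
  have "a \<in> NU``{a}" "x \<in> NU``{x}" using kcong_refl[OF NU_kcong] by auto
  then have "?a \<in> NU``{a}" "?x \<in> NU``{x}" by (metis someI)+
  then have "(a, ?a) \<in> NU" "(x, ?x) \<in> NU" by auto
  then have "(inf a x, inf ?a ?x) \<in> NU" using kcong_inf[OF NU_kcong] by blast
  then show ?thesis unfolding qmeet_def using NU_class_eq by metis
qed

lemma P_kcong: "kcong \<kappa> {(a,b). \<forall>x. (inf a x \<in> I \<longleftrightarrow> inf b x \<in> I)}" (is "kcong \<kappa> ?P")
proof -
  have eq: "equiv UNIV ?P"
    by (rule equivI) (auto intro!: refl_onI symI transI)
  have m: "\<forall>a b c d. (a,b) \<in> ?P \<longrightarrow> (c,d) \<in> ?P \<longrightarrow> (inf a c, inf b d) \<in> ?P"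
  proof (intro allI impI)
    fix a b c d assume ab: "(a,b) \<in> ?P" and cd: "(c,d) \<in> ?P"
    show "(inf a c, inf b d) \<in> ?P"
    proof (clarify)
      fix x
      have "inf (inf a c) x \<in> I \<longleftrightarrow> inf a (inf c x) \<in> I" by (simp add: inf_assoc)
      also have "\<dots> \<longleftrightarrow> inf b (inf c x) \<in> I" using ab by blast
      also have "\<dots> \<longleftrightarrow> inf c (inf b x) \<in> I" by (simp add: inf_left_commute)
      also have "\<dots> \<longleftrightarrow> inf d (inf b x) \<in> I" using cd by blast
      also have "\<dots> \<longleftrightarrow> inf (inf b d) x \<in> I" by (simp add: inf_assoc inf_left_commute inf_commute)
      finally show "inf (inf a c) x \<in> I \<longleftrightarrow> inf (inf b d) x \<in> I" .
    qed
  qed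
  have j: "\<forall>S. S \<subseteq> ?P \<longrightarrow> small \<kappa> S \<longrightarrow> (kJoin (fst ` S), kJoin (snd ` S)) \<in> ?P"
  proof (intro allI impI)
    fix S assume SP: "S \<subseteq> ?P" and sS: "small \<kappa> S"
    have A: "\<And>X Y lx ly x. (\<forall>s\<in>S. \<forall>x. inf (X s) x \<in> I \<longrightarrow> inf (Y s) x \<in> I) \<Longrightarrow>
       is_lub (X ` S) lx \<Longrightarrow> is_lub (Y ` S) ly \<Longrightarrow> inf lx x \<in> I \<Longrightarrow> inf ly x \<in> I"
    proof -
      fix X Y lx ly x
      assume e: "\<forall>s\<in>S. \<forall>x. inf (X s) x \<in> I \<longrightarrow> inf (Y s) x \<in> I"
        and lx: "is_lub (X ` S) lx" and ly: "is_lub (Y ` S) ly" and h: "inf lx x \<in> I"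
      have sY: "small \<kappa> (Y ` S)" using small_image[OF sS] .
      have d: "is_lub ((\<lambda>s. inf x s) ` (Y ` S)) (inf x ly)" using lub_dist[OF sY ly] .
      have sub: "(\<lambda>s. inf x s) ` (Y ` S) \<subseteq> I"
      proof
        fix t assume "t \<in> (\<lambda>s. inf x s) ` (Y ` S)"
        then obtain s where s: "s \<in> S" "t = inf x (Y s)" by auto
        have "X s \<le> lx" using lx s unfolding is_lub_def by auto
        then have "inf (X s) x \<le> inf lx x" by (meson inf_mono order_refl)
        then have "inf (X s) x \<in> I" using h I_down by blast
        then have "inf (Y s) x \<in> I" using e s by blast
        then show "t \<in> I" using s by (simp add: inf_commute)
      qed
      obtain u where u: "u \<in> I" "\<forall>t\<in>(\<lambda>s. inf x s) ` (Y ` S). t \<le> u"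
        using I_bound[OF sub small_image[OF sY]] by blast
      then have "inf x ly \<le> u" using d unfolding is_lub_def by blast
      then show "inf ly x \<in> I" using u I_down by (simp add: inf_commute)
    qed
    obtain lx where lx: "is_lub (fst ` S) lx" using lub_ex small_image[OF sS] by blast
    obtain ly where ly: "is_lub (snd ` S) ly" using lub_ex small_image[OF sS] by blast
    have e1: "\<forall>s\<in>S. \<forall>x. inf (fst s) x \<in> I \<longrightarrow> inf (snd s) x \<in> I" using SP by auto
    have e2: "\<forall>s\<in>S. \<forall>x. inf (snd s) x \<in> I \<longrightarrow> inf (fst s) x \<in> I" using SP by auto
    have "\<forall>x. inf lx x \<in> I \<longleftrightarrow> inf ly x \<in> I"
      using A[OF e1 lx ly] A[OF e2 ly lx] by blast
    then show "(kJoin (fst ` S), kJoin (snd ` S)) \<in> ?P"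
      using kJoin_eq[OF lx] kJoin_eq[OF ly] by simp
  qed
  show ?thesis by (rule kcongI[OF eq m j])
qed

lemma main_all: 
  defines "P \<equiv> {(a,b). \<forall>x. (inf a x \<in> I \<longleftrightarrow> inf b x \<in> I)}"
  shows "kcong \<kappa> P \<and> nablaI \<kappa> I \<subseteq> P \<and> cl \<kappa> P \<subseteq> nablaI \<kappa> I
    \<and> (\<forall>D. kcong \<kappa> D \<and> nablaI \<kappa> I \<subseteq> D \<and> cl \<kappa> D \<subseteq> nablaI \<kappa> I \<longrightarrow> D \<subseteq> P)
    \<and> P = pullback_cong (nablaI \<kappa> I)
            (madden (UNIV // nablaI \<kappa> I) (qmeet (nablaI \<kappa> I)) (qbot (nablaI \<kappa> I)))"
proof (intro conjI)
  show kP: "kcong \<kappa> P" unfolding P_def by (rule P_kcong)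
  have nP: "\<And>a. a \<in> I \<Longrightarrow> nabla a \<subseteq> P"
  proof
    fix a p assume a: "a \<in> I" and p: "p \<in> nabla a"
    obtain y z where yz: "p = (y,z)" "sup y a = sup z a" using p unfolding nabla_def by auto
    have D: "\<And>y z x. sup y a = sup z a \<Longrightarrow> inf z x \<in> I \<Longrightarrow> inf y x \<in> I"
    proof -
      fix y z x assume e: "sup y a = sup z a" and h: "inf z x \<in> I"
      have "inf y x \<le> inf (sup y a) x" by (meson inf_mono order_refl sup.cobounded1)
      also have "\<dots> = inf (sup z a) x" using e by simp
      also have "\<dots> = sup (inf z x) (inf a x)" by (simp add: inf_sup_distrib2)
      finally have "inf y x \<le> sup (inf z x) (inf a x)" .
      moreover have "inf a x \<in> I" using a I_down by simp
      ultimately show "inf y x \<in> I" using h I_sup I_down by blast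
    qed
    show "p \<in> P" unfolding P_def using yz D[of y z] D[of z y] by auto
  qed
  show "nablaI \<kappa> I \<subseteq> P" unfolding nablaI_def by (rule congJoin_least[OF kP]) (use nP in blast)
  show "cl \<kappa> P \<subseteq> nablaI \<kappa> I"
  proof -
    have "{a. nabla a \<subseteq> P} \<subseteq> I"
    proof
      fix a assume "a \<in> {a. nabla a \<subseteq> P}"
      moreover have "(a, bot) \<in> nabla a" unfolding nabla_def by simp
      ultimately have "(a, bot) \<in> P" by blast
      then have "\<forall>x. inf a x \<in> I \<longleftrightarrow> inf bot x \<in> I" unfolding P_def by simp
      then have "inf a top \<in> I \<longleftrightarrow> inf bot top \<in> I" by blast
      then show "a \<in> I" using I_bot by simp
    qed
    then show ?thesis unfolding cl_eq[OF kP] nablaI_def by (rule congJoin_mono)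
  qed
  show "\<forall>D. kcong \<kappa> D \<and> nablaI \<kappa> I \<subseteq> D \<and> cl \<kappa> D \<subseteq> nablaI \<kappa> I \<longrightarrow> D \<subseteq> P"
  proof (intro allI impI)
    fix D assume H: "kcong \<kappa> D \<and> nablaI \<kappa> I \<subseteq> D \<and> cl \<kappa> D \<subseteq> nablaI \<kappa> I"
    then have kD: "kcong \<kappa> D" and nD: "NU \<subseteq> D" and cD: "cl \<kappa> D \<subseteq> NU"
      using nablaI_eq by auto
    have key: "\<And>a b x. (a,b) \<in> D \<Longrightarrow> inf a x \<in> I \<Longrightarrow> inf b x \<in> I"
    proof -
      fix a b x assume ab: "(a,b) \<in> D" and h: "inf a x \<in> I"
      let ?c = "inf b x"
      have "(inf a x, ?c) \<in> D" using kcong_inf[OF kD ab kcong_refl[OF kD]] .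
      moreover have "(inf a x, bot) \<in> D" using nD NU_bot h by blast
      ultimately have cb: "(?c, bot) \<in> D" using kcong_sym[OF kD] kcong_trans[OF kD] by meson
      have "nabla ?c \<subseteq> D"
      proof
        fix p assume "p \<in> nabla ?c"
        then obtain y z where yz: "p = (y,z)" "sup y ?c = sup z ?c" unfolding nabla_def by auto
        have "(sup y ?c, sup y bot) \<in> D" using kcong_sup[OF kD kcong_refl[OF kD] cb] .
        then have 1: "(y, sup y ?c) \<in> D" using kcong_sym[OF kD] by simp
        have "(sup z ?c, sup z bot) \<in> D" using kcong_sup[OF kD kcong_refl[OF kD] cb] .
        then have 2: "(sup z ?c, z) \<in> D" by simp
        have "(y, sup z ?c) \<in> D" using 1 yz(2) by simp
        then have "(y, z) \<in> D" using 2 kcong_trans[OF kD] by blast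
        then show "p \<in> D" using yz(1) by simp
      qed
      then have "nabla ?c \<subseteq> cl \<kappa> D" unfolding cl_eq[OF kD] using congJoin_upper[of "nabla ` {a. nabla a \<subseteq> D}"] by blast
      moreover have "(?c, bot) \<in> nabla ?c" unfolding nabla_def by simp
      ultimately have "(?c, bot) \<in> NU" using cD by blast
      then show "?c \<in> I" using NU_bot by blast
    qed
    show "D \<subseteq> P"
    proof
      fix p assume "p \<in> D"
      then obtain a b where p: "p = (a,b)" "(a,b) \<in> D" by (cases p) auto
      have "(b,a) \<in> D" using kcong_sym[OF kD p(2)] .
      then show "p \<in> P" unfolding P_def using p key by blast
    qed
  qed
  show "P = pullback_cong (nablaI \<kappa> I)
            (madden (UNIV // nablaI \<kappa> I) (qmeet (nablaI \<kappa> I)) (qbot (nablaI \<kappa> I)))"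
  proof -
    have cls: "\<And>a. NU``{a} \<in> UNIV // NU" by (simp add: quotientI)
    have mz: "\<And>a x. qmeet NU (NU``{a}) (NU``{x}) = qbot NU \<longleftrightarrow> inf a x \<in> I"
    proof -
      fix a x
      have "qmeet NU (NU``{a}) (NU``{x}) = qbot NU \<longleftrightarrow> NU``{inf a x} = NU``{bot}"
        by (simp add: qmeet_class qbot_def)
      also have "\<dots> \<longleftrightarrow> (inf a x, bot) \<in> NU" by (rule NU_class_eq)
      also have "\<dots> \<longleftrightarrow> inf a x \<in> I" by (rule NU_bot)
      finally show "qmeet NU (NU``{a}) (NU``{x}) = qbot NU \<longleftrightarrow> inf a x \<in> I" .
    qed
    have EQ: "\<And>a b. (\<forall>X\<in>UNIV // NU. qmeet NU (NU``{a}) X = qbot NU \<longleftrightarrow> qmeet NU (NU``{b}) X = qbot NU)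
         \<longleftrightarrow> (\<forall>x. inf a x \<in> I \<longleftrightarrow> inf b x \<in> I)"
    proof
      fix a b
      assume H: "\<forall>X\<in>UNIV // NU. qmeet NU (NU``{a}) X = qbot NU \<longleftrightarrow> qmeet NU (NU``{b}) X = qbot NU"
      show "\<forall>x. inf a x \<in> I \<longleftrightarrow> inf b x \<in> I"
      proof
        fix x
        have "qmeet NU (NU``{a}) (NU``{x}) = qbot NU \<longleftrightarrow> qmeet NU (NU``{b}) (NU``{x}) = qbot NU"
          using H cls by blast
        then show "inf a x \<in> I \<longleftrightarrow> inf b x \<in> I" by (simp add: mz)
      qed
    next
      fix a b
      assume H: "\<forall>x. inf a x \<in> I \<longleftrightarrow> inf b x \<in> I"
      show "\<forall>X\<in>UNIV // NU. qmeet NU (NU``{a}) X = qbot NU \<longleftrightarrow> qmeet NU (NU``{b}) X = qbot NU"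
      proof
        fix X assume "X \<in> UNIV // NU"
        then obtain x where X: "X = NU``{x}" by (auto elim!: quotientE)
        show "qmeet NU (NU``{a}) X = qbot NU \<longleftrightarrow> qmeet NU (NU``{b}) X = qbot NU"
          unfolding X mz using H by blast
      qed
    qed
    show ?thesis
    proof (rule set_eqI)
      fix p :: "'a \<times> 'a"
      obtain a b where p: "p = (a,b)" by (cases p)
      have "p \<in> pullback_cong (nablaI \<kappa> I)
            (madden (UNIV // nablaI \<kappa> I) (qmeet (nablaI \<kappa> I)) (qbot (nablaI \<kappa> I)))
          \<longleftrightarrow> (\<forall>X\<in>UNIV // NU. qmeet NU (NU``{a}) X = qbot NU \<longleftrightarrow> qmeet NU (NU``{b}) X = qbot NU)"
        unfolding p nablaI_eq pullback_cong_def madden_def using cls by simp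
      also have "\<dots> \<longleftrightarrow> p \<in> P" unfolding EQ P_def p by simp
      finally show "p \<in> P \<longleftrightarrow> p \<in> pullback_cong (nablaI \<kappa> I)
            (madden (UNIV // nablaI \<kappa> I) (qmeet (nablaI \<kappa> I)) (qbot (nablaI \<kappa> I)))" by blast
    qed
  qed
qed

end

theorem mainTheorem6:
  fixes \<kappa> :: "'k rel" and I :: "('a::{distrib_lattice,bounded_lattice}) set"
  assumes "regular_cardinal \<kappa>"
    and "kframe \<kappa> TYPE('a)"
    and "kideal \<kappa> I"
  defines "P \<equiv> {(a,b). \<forall>x. (inf a x \<in> I \<longleftrightarrow> inf b x \<in> I)}"
  shows "kcong \<kappa> P \<and> nablaI \<kappa> I \<subseteq> P \<and> cl \<kappa> P \<subseteq> nablaI \<kappa> I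
    \<and> (\<forall>D. kcong \<kappa> D \<and> nablaI \<kappa> I \<subseteq> D \<and> cl \<kappa> D \<subseteq> nablaI \<kappa> I \<longrightarrow> D \<subseteq> P)
    \<and> P = pullback_cong (nablaI \<kappa> I)
            (madden (UNIV // nablaI \<kappa> I) (qmeet (nablaI \<kappa> I)) (qbot (nablaI \<kappa> I)))"
  unfolding P_def by (rule main_all[OF assms(1,2,3)])

end
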